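(* Let $S \subseteq \mathbb{R}^n$ be nonempty, closed and convex, let $F = (F_1,\dots,F_m)^\top \colon S \to \mathbb{R}^m$ be continuous with each $F_i$ strictly convex, let $\ell > 0$, and let \[ u_\ell(x) := \max_{y \in S} \min_{i = 1,\dots,m} \left\{F_i(x) - F_i(y) - \frac{\ell}{2}\|x - y\|^2\right\}, \quad x\in S. \] If $x \in S$ is a stationary point of $\min_{x \in S} u_\ell(x)$, i.e., $u_\ell'(x; z - x) \ge 0$ for all $z \in S$, then $x$ is Pareto optimal for $\min_{x\in S} F(x)$.
   Context: $u_\ell'(x;d) := \lim_{t\searrow 0}(u_\ell(x+td)-u_\ell(x))/t$ (directional derivative). A point $x^\ast \in S$ is Pareto optimal for $\min_{x\in S} F(x)$ if there is no $x \in S$ with $F_i(x) \le F_i(x^\ast)$ for all $i$ and $F(x) \neq F(x^\ast)$. *)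

theory Defs
  imports "HOL-Analysis.Analysis"
begin

definition strictly_convex_on :: "'a::real_vector set \<Rightarrow> ('a \<Rightarrow> real) \<Rightarrow> bool" where
  "strictly_convex_on S f \<longleftrightarrow>
     (\<forall>x\<in>S. \<forall>y\<in>S. \<forall>t::real. x \<noteq> y \<and> 0 < t \<and> t < 1 \<longrightarrow>
        f ((1 - t) *\<^sub>R x + t *\<^sub>R y) < (1 - t) * f x + t * f y)"

text \<open>Merit function u_l(x) = max over y in S of min over i < m of
  F_i(x) - F_i(y) - l/2 |x - y|^2 (the max is attained, so Sup equals it).\<close>
definition u_merit :: "real \<Rightarrow> nat \<Rightarrow> (nat \<Rightarrow> 'a::euclidean_space \<Rightarrow> real) \<Rightarrow> 'a set \<Rightarrow> 'a \<Rightarrow> real" where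
  "u_merit l m F S x =
     (SUP y\<in>S. Min ((\<lambda>i. F i x - F i y - l / 2 * (norm (x - y))\<^sup>2) ` {..<m}))"

definition dir_deriv :: "('a::real_normed_vector \<Rightarrow> real) \<Rightarrow> 'a \<Rightarrow> 'a \<Rightarrow> real \<Rightarrow> bool" where
  "dir_deriv u x d L \<longleftrightarrow> ((\<lambda>t. (u (x + t *\<^sub>R d) - u x) / t) \<longlongrightarrow> L) (at_right 0)"

definition pareto_optimal :: "nat \<Rightarrow> (nat \<Rightarrow> 'a \<Rightarrow> real) \<Rightarrow> 'a set \<Rightarrow> 'a \<Rightarrow> bool" where
  "pareto_optimal m F S xs \<longleftrightarrow> xs \<in> S \<and>
     \<not> (\<exists>x\<in>S. (\<forall>i<m. F i x \<le> F i xs) \<and> (\<exists>i<m. F i x \<noteq> F i xs))"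

end

theory Submission imports Defs begin

definition phi :: "real \<Rightarrow> nat \<Rightarrow> (nat \<Rightarrow> 'a::euclidean_space \<Rightarrow> real) \<Rightarrow> 'a \<Rightarrow> 'a \<Rightarrow> real" where
  "phi l m F x y = Min ((\<lambda>i. F i x - F i y - l / 2 * (norm (x - y))\<^sup>2) ` {..<m})"

lemma u_eq: "u_merit l m F S x = (SUP y\<in>S. phi l m F x y)"
  by (simp add: u_merit_def phi_def)

lemma phi_le: "j < m \<Longrightarrow> phi l m F x y \<le> F j x - F j y - l / 2 * (norm (x - y))\<^sup>2"
  unfolding phi_def by (rule Min_le) auto

lemma phi_in: "m \<ge> 1 \<Longrightarrow> \<exists>j<m. phi l m F x y = F j x - F j y - l / 2 * (norm (x - y))\<^sup>2"
proof -
  assume "m \<ge> 1"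
  then have "Min ((\<lambda>i. F i x - F i y - l / 2 * (norm (x - y))\<^sup>2) ` {..<m}) \<in> (\<lambda>i. F i x - F i y - l / 2 * (norm (x - y))\<^sup>2) ` {..<m}"
    by (intro Min_in) (auto simp: lessThan_empty_iff)
  then show ?thesis unfolding phi_def by auto
qed

lemma phi_ge: "m \<ge> 1 \<Longrightarrow> (\<And>i. i < m \<Longrightarrow> c \<le> F i x - F i y - l / 2 * (norm (x - y))\<^sup>2) \<Longrightarrow> c \<le> phi l m F x y"
  unfolding phi_def by (subst Min_ge_iff) (auto simp: lessThan_empty_iff)

lemma phi_self: "m \<ge> 1 \<Longrightarrow> phi l m F x x = 0"
proof -
  assume "m \<ge> 1"
  have "phi l m F x x \<le> 0" using phi_le[of 0 m l F x x] \<open>m \<ge> 1\<close> by simp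
  moreover have "0 \<le> phi l m F x x" by (rule phi_ge) (use \<open>m \<ge> 1\<close> in auto)
  ultimately show ?thesis by simp
qed

lemma norm_comb:
  fixes u v :: "'a::real_inner"
  shows "(norm ((1-s) *\<^sub>R u + s *\<^sub>R v))\<^sup>2 = (1-s) * (norm u)\<^sup>2 + s * (norm v)\<^sup>2 - s * (1-s) * (norm (u - v))\<^sup>2"
  unfolding power2_norm_eq_inner
  by (simp add: inner_add_left inner_add_right inner_diff_left inner_diff_right inner_commute algebra_simps)

lemma sc_convex:
  assumes "strictly_convex_on S f" "a \<in> S" "b \<in> S" "0 \<le> s" "s \<le> 1"
  shows "f ((1-s) *\<^sub>R a + s *\<^sub>R b) \<le> (1-s) * f a + s * f b"
proof (cases "a = b \<or> s = 0 \<or> s = 1")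
  case True
  then show ?thesis
    by (auto simp: scaleR_left_distrib[symmetric] algebra_simps)
next
  case False
  then show ?thesis using assms unfolding strictly_convex_on_def
    by (metis less_eq_real_def)
qed

lemma continuous_on_Min_fam:
  fixes g :: "nat \<Rightarrow> 'a::topological_space \<Rightarrow> real"
  assumes "finite I" "I \<noteq> {}" "\<And>i. i \<in> I \<Longrightarrow> continuous_on S (g i)"
  shows "continuous_on S (\<lambda>y. Min ((\<lambda>i. g i y) ` I))"
  using assms
proof (induction I rule: finite_ne_induct)
  case (singleton x)
  then show ?case by simp
next
  case (insert x F)
  have "(\<lambda>y. Min ((\<lambda>i. g i y) ` insert x F)) = (\<lambda>y. min (g x y) (Min ((\<lambda>i. g i y) ` F)))"
    using insert by (auto simp: Min_insert)
  then show ?case using insert by (auto intro!: continuous_on_min)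
qed

lemma phi_concave:
  fixes a b x :: "'a::euclidean_space"
  assumes conv: "\<And>i. i<m \<Longrightarrow> F i ((1-s) *\<^sub>R a + s *\<^sub>R b) \<le> (1-s) * F i a + s * F i b"
    and m: "m \<ge> 1" and s: "0 \<le> s" "s \<le> 1"
  shows "(1-s) * phi l m F x a + s * phi l m F x b + l / 2 * s * (1 - s) * (norm (a - b))\<^sup>2
          \<le> phi l m F x ((1-s) *\<^sub>R a + s *\<^sub>R b)"
proof (rule phi_ge[OF m])
  fix i assume i: "i < m"
  define p where "p = (1-s) *\<^sub>R a + s *\<^sub>R b"
  have xp: "x - p = (1-s) *\<^sub>R (x - a) + s *\<^sub>R (x - b)"
    unfolding p_def by (simp add: algebra_simps)
  have "(norm (x - p))\<^sup>2 = (1-s) * (norm (x-a))\<^sup>2 + s * (norm (x-b))\<^sup>2 - s*(1-s)*(norm ((x-a)-(x-b)))\<^sup>2"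
    unfolding xp by (rule norm_comb)
  also have "(x-a)-(x-b) = b - a" by simp
  also have "norm (b - a) = norm (a - b)" by (rule norm_minus_commute)
  finally have np: "(norm (x - p))\<^sup>2 = (1-s) * (norm (x-a))\<^sup>2 + s * (norm (x-b))\<^sup>2 - s*(1-s)*(norm (a-b))\<^sup>2" .
  have np2: "l / 2 * (norm (x - p))\<^sup>2 = l / 2 * ((1-s) * (norm (x-a))\<^sup>2 + s * (norm (x-b))\<^sup>2 - s*(1-s)*(norm (a-b))\<^sup>2)"
    by (simp add: np)
  have h1: "(1-s) * phi l m F x a \<le> (1-s) * (F i x - F i a - l / 2 * (norm (x - a))\<^sup>2)"
    using phi_le[OF i] s by (intro mult_left_mono) auto
  have h2: "s * phi l m F x b \<le> s * (F i x - F i b - l / 2 * (norm (x - b))\<^sup>2)"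
    using phi_le[OF i] s by (intro mult_left_mono) auto
  have h3: "F i p \<le> (1-s) * F i a + s * F i b" unfolding p_def by (rule conv[OF i])
  show "(1-s) * phi l m F x a + s * phi l m F x b + l / 2 * s * (1 - s) * (norm (a - b))\<^sup>2
          \<le> F i x - F i ((1-s) *\<^sub>R a + s *\<^sub>R b) - l / 2 * (norm (x - ((1-s) *\<^sub>R a + s *\<^sub>R b)))\<^sup>2"
    unfolding p_def[symmetric] using h1 h2 h3 np2 by (simp add: algebra_simps diff_divide_distrib add_divide_distrib)
qed

theorem theorem3p8:
  fixes S :: "'a::euclidean_space set"
    and F :: "nat \<Rightarrow> 'a \<Rightarrow> real"
    and m :: nat and l :: real and x :: 'a
  assumes "S \<noteq> {}" and "closed S" and "convex S"
    and "m \<ge> 1"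
    and "\<And>i. i < m \<Longrightarrow> continuous_on S (F i)"
    and "\<And>i. i < m \<Longrightarrow> strictly_convex_on S (F i)"
    and "l > 0"
    and "x \<in> S"
    and "\<forall>z\<in>S. \<exists>L. dir_deriv (u_merit l m F S) x (z - x) L \<and> L \<ge> 0"
  shows "pareto_optimal m F S x"
proof -
  note m = assms(4)
  note xS = assms(8)
  have m0: "0 < m" using m by linarith
  have conv: "\<And>i a b s. i<m \<Longrightarrow> a\<in>S \<Longrightarrow> b\<in>S \<Longrightarrow> 0\<le>s \<Longrightarrow> s\<le>1 \<Longrightarrow>
      F i ((1-s) *\<^sub>R a + s *\<^sub>R b) \<le> (1-s) * F i a + s * F i b"
    using sc_convex assms(6) by blast
  have inS: "\<And>a b s. a\<in>S \<Longrightarrow> b\<in>S \<Longrightarrow> 0\<le>s \<Longrightarrow> s\<le>1 \<Longrightarrow> (1-s) *\<^sub>R a + s *\<^sub>R b \<in> S"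
    using assms(3) unfolding convex_def by auto
  have conc: "\<And>a b s. a\<in>S \<Longrightarrow> b\<in>S \<Longrightarrow> 0\<le>s \<Longrightarrow> s\<le>1 \<Longrightarrow>
      (1-s) * phi l m F x a + s * phi l m F x b + l / 2 * s * (1 - s) * (norm (a - b))\<^sup>2
          \<le> phi l m F x ((1-s) *\<^sub>R a + s *\<^sub>R b)"
    by (rule phi_concave[OF _ m]) (auto intro: conv)
  have cont: "continuous_on S (\<lambda>y. phi l m F x y)"
    unfolding phi_def
    by (rule continuous_on_Min_fam) (auto intro!: continuous_intros assms(5) simp: lessThan_empty_iff m0)
  have self0: "phi l m F x x = 0" by (rule phi_self[OF m])
  have K1c: "compact (S \<inter> cball x 1)" using assms(2) by auto
  have K1ne: "S \<inter> cball x 1 \<noteq> {}" using xS by auto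
  obtain w1 where w1: "w1 \<in> S \<inter> cball x 1" "\<forall>y\<in>S \<inter> cball x 1. phi l m F x y \<le> phi l m F x w1"
    using continuous_attains_sup[OF K1c K1ne continuous_on_subset[OF cont]] by auto
  define M where "M = phi l m F x w1"
  have M0: "0 \<le> M" using w1(2) xS self0 unfolding M_def by (metis IntI centre_in_cball zero_le_one)
  have growth: "phi l m F x y < 0" if yS: "y \<in> S" and big: "norm (y - x) > 1 + 2 * M / l" for y
  proof -
    define r where "r = norm (y - x)"
    have r1: "r > 1" using big M0 assms(7) unfolding r_def
      by (smt (verit) divide_nonneg_pos)
    define s where "s = 1 / r"
    have s01: "0 \<le> s" "s \<le> 1" using r1 unfolding s_def by auto
    define w where "w = (1-s) *\<^sub>R x + s *\<^sub>R y"
    have wS: "w \<in> S" unfolding w_def using inS[OF xS yS s01] .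
    have "w - x = s *\<^sub>R (y - x)" unfolding w_def by (simp add: algebra_simps)
    then have "norm (w - x) = s * r" using s01 unfolding r_def by simp
    also have "s * r = 1" unfolding s_def using r1 by simp
    finally have "dist x w \<le> 1" by (simp add: dist_norm norm_minus_commute)
    then have "phi l m F x w \<le> M" using w1 wS unfolding M_def by auto
    moreover have "(1-s) * phi l m F x x + s * phi l m F x y + l / 2 * s * (1 - s) * (norm (x - y))\<^sup>2
          \<le> phi l m F x w" unfolding w_def by (rule conc[OF xS yS s01])
    moreover have "norm (x - y) = r" unfolding r_def by (simp add: norm_minus_commute)
    ultimately have "s * phi l m F x y + l / 2 * s * (1 - s) * r\<^sup>2 \<le> M" using self0 by simp
    moreover have "s * (1 - s) * r\<^sup>2 = r - 1" unfolding s_def using r1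
      by (simp add: power2_eq_square field_simps)
    ultimately have "s * phi l m F x y \<le> M - l / 2 * (r - 1)"
      by (metis (no_types, lifting) add.commute le_diff_eq mult.assoc)
    then have "r * (s * phi l m F x y) \<le> r * (M - l / 2 * (r - 1))"
      using r1 by (intro mult_left_mono) auto
    then have "phi l m F x y \<le> r * (M - l / 2 * (r - 1))"
      unfolding s_def using r1 by simp
    moreover have "M - l / 2 * (r - 1) < 0"
      using big assms(7) unfolding r_def[symmetric] by (simp add: field_simps)
    ultimately show ?thesis using r1
      by (smt (verit) mult_pos_neg)
  qed
  define R where "R = 2 + 2 * M / l"
  have Kc: "compact (S \<inter> cball x R)" using assms(2) by auto
  have Kne: "S \<inter> cball x R \<noteq> {}" using xS M0 assms(7) unfolding R_def by auto
  obtain ys where ys: "ys \<in> S \<inter> cball x R" "\<forall>y\<in>S \<inter> cball x R. phi l m F x y \<le> phi l m F x ys"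
    using continuous_attains_sup[OF Kc Kne continuous_on_subset[OF cont]] by auto
  have ysS: "ys \<in> S" using ys by auto
  have R0: "0 \<le> R" using M0 assms(7) unfolding R_def by auto
  have U0: "0 \<le> phi l m F x ys" using ys(2) xS R0 self0 by (metis IntI centre_in_cball)
  have ymax: "phi l m F x y \<le> phi l m F x ys" if "y \<in> S" for y
  proof (cases "y \<in> cball x R")
    case True then show ?thesis using ys that by auto
  next
    case False
    then have "norm (y - x) > 1 + 2 * M / l" unfolding R_def by (auto simp: dist_norm norm_minus_commute)
    then show ?thesis using growth[OF that] U0 by linarith
  qed
  define U where "U = phi l m F x ys"
  have uX: "u_merit l m F S x = U"
    unfolding u_eq U_def by (rule cSup_eq_maximum) (use ysS ymax in auto)
  have strong: "phi l m F x y \<le> U - l / 2 * (norm (y - ys))\<^sup>2" if yS: "y \<in> S" for y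
  proof -
    define N where "N = (norm (ys - y))\<^sup>2"
    have N0: "0 \<le> N" unfolding N_def by simp
    have key: "phi l m F x y - U + l / 2 * (1 - s) * N \<le> 0" if s: "0 < s" "s < 1" for s
    proof -
      have "(1-s) * U + s * phi l m F x y + l / 2 * s * (1 - s) * N \<le> U"
        using conc[OF ysS yS, of s] s ymax[OF inS[OF ysS yS, of s]] unfolding U_def N_def by auto
      then have "s * (phi l m F x y - U + l / 2 * (1 - s) * N) \<le> 0"
        by (simp add: algebra_simps)
      then show ?thesis using s by (simp add: mult_le_0_iff)
    qed
    have "phi l m F x y - U + l / 2 * N \<le> 0"
    proof (rule field_le_epsilon)
      fix e :: real assume e: "0 < e"
      define s where "s = min (1/2) (e / (l / 2 * N + 1))"
      have s: "0 < s" "s < 1" unfolding s_def using e N0 assms(7) by (auto intro!: divide_pos_pos add_nonneg_pos)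
      have "s * (l / 2 * N) \<le> e / (l / 2 * N + 1) * (l / 2 * N)"
        unfolding s_def using N0 assms(7) by (intro mult_right_mono) auto
      also have "\<dots> \<le> e"
      proof -
        have a0: "0 \<le> l / 2 * N" using N0 assms(7) by simp
        have "e / (l / 2 * N + 1) * (l / 2 * N) = e * ((l / 2 * N) / (l / 2 * N + 1))" by simp
        also have "(l / 2 * N) / (l / 2 * N + 1) \<le> 1" using a0 by simp
        then have "e * ((l / 2 * N) / (l / 2 * N + 1)) \<le> e * 1" using e by (intro mult_left_mono) auto
        finally show ?thesis by simp
      qed
      finally have "s * (l / 2 * N) \<le> e" .
      with key[OF s] show "phi l m F x y - U + l / 2 * N \<le> 0 + e"
        by (simp add: algebra_simps diff_divide_distrib)
    qed
    then show ?thesis unfolding N_def by (simp add: norm_minus_commute)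
  qed
  have UD: "l / 2 * (norm (x - ys))\<^sup>2 \<le> U" using strong[OF xS] self0 by simp
  have ysx: "ys = x"
  proof (rule ccontr)
    assume ne: "ys \<noteq> x"
    define mid where "mid = (1 - 1/2) *\<^sub>R x + (1/2::real) *\<^sub>R ys"
    have midS: "mid \<in> S" unfolding mid_def by (rule inS[OF xS ysS]) auto
    define dl where "dl j = (1 - 1/2) * F j x + 1/2 * F j ys - F j mid" for j
    have dlpos: "dl j > 0" if "j < m" for j
    proof -
      have sc: "\<forall>a\<in>S. \<forall>b\<in>S. \<forall>t::real. a \<noteq> b \<and> 0 < t \<and> t < 1 \<longrightarrow>
          F j ((1 - t) *\<^sub>R a + t *\<^sub>R b) < (1 - t) * F j a + t * F j b"
        using assms(6)[OF that] unfolding strictly_convex_on_def .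
      have c: "x \<noteq> ys \<and> 0 < (1/2::real) \<and> (1/2::real) < 1" using ne by auto
      have "F j mid < (1 - 1/2) * F j x + 1/2 * F j ys"
        unfolding mid_def using sc xS ysS c by blast
      then show ?thesis unfolding dl_def by simp
    qed
    define d where "d = Min (dl ` {..<m})"
    have dpos: "d > 0" unfolding d_def using dlpos m by (simp add: lessThan_empty_iff)
    have dle: "d \<le> dl j" if "j < m" for j unfolding d_def using that by (intro Min_le) auto
    define D where "D = (norm (ys - x))\<^sup>2"
    have bound: "u_merit l m F S (x + t *\<^sub>R (ys - x)) \<le> U - 2 * t * d" if t: "0 < t" "t \<le> 1/2" for t
    proof -
      define xt where "xt = x + t *\<^sub>R (ys - x)"
      have xt_eq: "xt = (1 - 2*t) *\<^sub>R x + (2*t) *\<^sub>R mid"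
        unfolding xt_def mid_def by (simp add: algebra_simps flip: scaleR_2)
      have "phi l m F xt y \<le> U - 2 * t * d" if yS: "y \<in> S" for y
      proof -
        obtain j where j: "j < m" "phi l m F x y = F j x - F j y - l / 2 * (norm (x - y))\<^sup>2"
          using phi_in[OF m] by blast
        have a1: "phi l m F xt y \<le> F j xt - F j y - l / 2 * (norm (xt - y))\<^sup>2"
          by (rule phi_le[OF j(1)])
        have a2: "F j xt \<le> (1 - 2*t) * F j x + (2*t) * F j mid"
          unfolding xt_eq using conv[OF j(1) xS midS, of "2*t"] t by auto
        have a3: "F j mid = (F j x + F j ys) / 2 - dl j" unfolding dl_def by (simp add: field_simps)
        have a4: "U \<le> F j x - F j ys - l / 2 * D"
          unfolding U_def D_def using phi_le[OF j(1), of l F x ys] by (simp add: norm_minus_commute)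
        have a4': "t * U \<le> t * (F j x - F j ys - l / 2 * D)" using a4 t by (intro mult_left_mono) auto
        have a5: "phi l m F x y \<le> U - l / 2 * (norm (y - ys))\<^sup>2" by (rule strong[OF yS])
        have e1: "(norm (xt - y))\<^sup>2 = (norm (x - y))\<^sup>2 + 2 * t * inner (x - y) (ys - x) + t\<^sup>2 * D"
          unfolding xt_def D_def power2_norm_eq_inner
          by (simp add: inner_add_left inner_add_right inner_diff_left inner_diff_right inner_commute
              algebra_simps power2_eq_square)
        have e2: "inner (x - y) (ys - x) = - D + inner (ys - y) (ys - x)"
          unfolding D_def power2_norm_eq_inner
          by (simp add: inner_diff_left inner_diff_right inner_commute algebra_simps)
        have e3: "- 2 * t * inner (ys - y) (ys - x) \<le> (norm (y - ys))\<^sup>2 + t\<^sup>2 * D"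
        proof -
          have "0 \<le> (norm ((ys - y) + t *\<^sub>R (ys - x)))\<^sup>2" by simp
          also have "\<dots> = (norm (ys - y))\<^sup>2 + 2 * t * inner (ys - y) (ys - x) + t\<^sup>2 * D"
            unfolding D_def power2_norm_eq_inner
            by (simp add: inner_add_left inner_add_right inner_commute algebra_simps power2_eq_square)
          finally show ?thesis by (simp add: norm_minus_commute)
        qed
        have dj: "2 * t * d \<le> 2 * t * dl j" using dle[OF j(1)] t by simp
        have l1: "l / 2 * (norm (xt - y))\<^sup>2 = l / 2 * (norm (x - y))\<^sup>2 - l * t * D
              + l * t * inner (ys - y) (ys - x) + l / 2 * t\<^sup>2 * D"
          unfolding e1 e2 by (simp add: algebra_simps)
        have l3: "- (l * t * inner (ys - y) (ys - x)) \<le> l / 2 * ((norm (y - ys))\<^sup>2 + t\<^sup>2 * D)"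
          using mult_left_mono[OF e3, of "l/2"] assms(7) by (simp add: algebra_simps)
        have tUD: "t * (l / 2 * D) \<le> t * U" using UD t unfolding D_def
          by (intro mult_left_mono) (auto simp: norm_minus_commute)
        have b2: "F j xt \<le> F j x - t * F j x + t * F j ys - 2 * (t * dl j)"
        proof -
          have c1: "(2*t) * F j mid = t * F j x + t * F j ys - 2 * (t * dl j)"
            unfolding a3 by (simp add: field_simps)
          have c2: "(1 - 2*t) * F j x = F j x - 2 * (t * F j x)" by (simp add: algebra_simps)
          show ?thesis using a2 c1 c2 by linarith
        qed
        have b4: "t * U \<le> t * F j x - t * F j ys - (l * t) * D / 2"
          using a4' by (simp add: algebra_simps)
        have b1: "l / 2 * (norm (xt - y))\<^sup>2 = l / 2 * (norm (x - y))\<^sup>2 - (l * t) * D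
              + (l * t) * inner (ys - y) (ys - x) + (l * t\<^sup>2) * D / 2"
          using l1 by (simp add: algebra_simps)
        have b3: "- ((l * t) * inner (ys - y) (ys - x)) \<le> l / 2 * (norm (y - ys))\<^sup>2 + (l * t\<^sup>2) * D / 2"
          using l3 by (simp add: algebra_simps)
        have b5: "(l * t) * D / 2 \<le> t * U" using tUD by (simp add: algebra_simps)
        have b6: "2 * (t * d) \<le> 2 * (t * dl j)" using dj by (simp add: algebra_simps)
        have "phi l m F xt y \<le> U - 2 * (t * d)"
          using a1 b1 b2 b3 b4 b5 b6 a5 j(2) by linarith
        then show ?thesis by (simp add: algebra_simps)
      qed
      then show ?thesis unfolding u_eq xt_def[symmetric]
        by (intro cSUP_least) (use assms(1) in auto)
    qed
    obtain L where L: "dir_deriv (u_merit l m F S) x (ys - x) L" "L \<ge> 0"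
      using assms(9) ysS by blast
    have ev: "eventually (\<lambda>t. (u_merit l m F S (x + t *\<^sub>R (ys - x)) - u_merit l m F S x) / t \<le> - 2 * d)
        (at_right 0)"
      unfolding eventually_at_right_field
    proof (intro exI[of _ "1/2"] conjI allI impI)
      fix t :: real assume "0 < t" "t < 1/2"
      then have "u_merit l m F S (x + t *\<^sub>R (ys - x)) - u_merit l m F S x \<le> t * (- 2 * d)"
        using bound[of t] uX by simp
      then show "(u_merit l m F S (x + t *\<^sub>R (ys - x)) - u_merit l m F S x) / t \<le> - 2 * d"
        using \<open>0 < t\<close> by (simp add: divide_le_eq mult.commute)
    qed simp
    have "L \<le> - 2 * d"
      by (rule tendsto_upperbound[OF L(1)[unfolded dir_deriv_def] ev]) simp
    then show False using L(2) dpos by simp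
  qed
  have weak: "phi l m F x y \<le> - l / 2 * (norm (y - x))\<^sup>2" if "y \<in> S" for y
    using strong[OF that] ysx self0 unfolding U_def by simp
  show ?thesis unfolding pareto_optimal_def
  proof (intro conjI xS notI)
    assume "\<exists>z\<in>S. (\<forall>i<m. F i z \<le> F i x) \<and> (\<exists>i<m. F i z \<noteq> F i x)"
    then obtain z k where z: "z \<in> S" "\<forall>i<m. F i z \<le> F i x" "k < m" "F k z \<noteq> F k x" by blast
    have zx: "z \<noteq> x" using z by auto
    define w where "w = (1 - 1/2) *\<^sub>R x + (1/2::real) *\<^sub>R z"
    have wS: "w \<in> S" unfolding w_def by (rule inS[OF xS z(1)]) auto
    have wlt: "F i w < F i x" if "i < m" for i
    proof -
      have sc: "\<forall>a\<in>S. \<forall>b\<in>S. \<forall>t::real. a \<noteq> b \<and> 0 < t \<and> t < 1 \<longrightarrow>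
          F i ((1 - t) *\<^sub>R a + t *\<^sub>R b) < (1 - t) * F i a + t * F i b"
        using assms(6)[OF that] unfolding strictly_convex_on_def .
      have c: "x \<noteq> z \<and> 0 < (1/2::real) \<and> (1/2::real) < 1" using zx by auto
      have "F i w < (1 - 1/2) * F i x + 1/2 * F i z"
        unfolding w_def using sc xS z(1) c by blast
      then show ?thesis using z(2) that by auto
    qed
    obtain j where j: "j < m" "phi l m F x w = F j x - F j w - l / 2 * (norm (x - w))\<^sup>2"
      using phi_in[OF m] by blast
    show False using weak[OF wS] j wlt[OF j(1)] by (simp add: norm_minus_commute)
  qed
qed

end
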